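(* Let $0<\beta\leq 1$ and $\delta>0$. There exists a constant $M=M(\beta,\delta)$ such that the following holds for every $0<\alpha<1$, every $d$, and every finite $L$-spherical code $P\subset\mathbb{R}^d$ with $L=[-1,-\beta]\cup\{\alpha\}$. Let $G$ be the graph on vertex set $P$ in which distinct $x,y\in P$ are adjacent iff $\langle x,y\rangle\in[-1,-\beta]$. Let $U\subseteq P$ be arbitrary and let $I$ be a maximum-size independent (in $G$) subset of $U$. Then there is a subset $U'\subseteq U\setminus I$ with $|U'|\geq|U|-M|I|$ such that every vertex of $U'$ is adjacent in $G$ to at least $(1-\delta)|I|$ vertices of $I$.
   Context: For a set $L\subseteq[-1,1]$, an $L$-spherical code in $\mathbb{R}^d$ is a set $P$ of unit vectors such that $\langle x,y\rangle\in L$ for all distinct $x,y\in P$. *)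

theory Defs
  imports Complex_Main
begin

text \<open>Points of R^d are represented as functions nat => real vanishing outside {..<d},
  so that the dimension d can be quantified inside the statement.\<close>

definition vec_in :: "nat \<Rightarrow> (nat \<Rightarrow> real) \<Rightarrow> bool" where
  "vec_in d x \<longleftrightarrow> (\<forall>i\<ge>d. x i = 0)"

definition dinner :: "nat \<Rightarrow> (nat \<Rightarrow> real) \<Rightarrow> (nat \<Rightarrow> real) \<Rightarrow> real" where
  "dinner d x y = (\<Sum>i<d. x i * y i)"

definition spherical_code :: "nat \<Rightarrow> real set \<Rightarrow> (nat \<Rightarrow> real) set \<Rightarrow> bool" where
  "spherical_code d L P \<longleftrightarrow>
     (\<forall>x\<in>P. vec_in d x \<and> dinner d x x = 1) \<and>
     (\<forall>x\<in>P. \<forall>y\<in>P. x \<noteq> y \<longrightarrow> dinner d x y \<in> L)"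

definition adj :: "real \<Rightarrow> nat \<Rightarrow> (nat \<Rightarrow> real) \<Rightarrow> (nat \<Rightarrow> real) \<Rightarrow> bool" where
  "adj \<beta> d x y \<longleftrightarrow> x \<noteq> y \<and> dinner d x y \<in> {-1..-\<beta>}"

definition indep :: "real \<Rightarrow> nat \<Rightarrow> (nat \<Rightarrow> real) set \<Rightarrow> bool" where
  "indep \<beta> d I \<longleftrightarrow> (\<forall>x\<in>I. \<forall>y\<in>I. \<not> adj \<beta> d x y)"

definition max_indep_subset ::
  "real \<Rightarrow> nat \<Rightarrow> (nat \<Rightarrow> real) set \<Rightarrow> (nat \<Rightarrow> real) set \<Rightarrow> bool" where
  "max_indep_subset \<beta> d U I \<longleftrightarrow> I \<subseteq> U \<and> indep \<beta> d I \<and>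
     (\<forall>J. J \<subseteq> U \<and> indep \<beta> d J \<longrightarrow> card J \<le> card I)"

end

theory Submission
  imports Defs "HOL-Library.Ramsey"
begin

lemma dinner_sym: "dinner d x y = dinner d y x"
  by (simp add: dinner_def mult.commute)

lemma dinner_self_nonneg: "0 \<le> dinner d x x"
  by (simp add: dinner_def sum_nonneg)

definition vs :: "(nat \<Rightarrow> real) set \<Rightarrow> nat \<Rightarrow> real" where
  "vs A i = (\<Sum>y\<in>A. y i)"

lemma dinner_vs_left: "dinner d (vs A) w = (\<Sum>y\<in>A. dinner d y w)"
  unfolding dinner_def vs_def by (simp add: sum_distrib_right sum.swap[of _ A])

lemma dinner_vs_right: "dinner d w (vs A) = (\<Sum>y\<in>A. dinner d w y)"
  using dinner_vs_left[of d A w] by (simp add: dinner_sym)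

lemma expand3:
  "dinner d (\<lambda>i. p * a i + q * b i + r * c i) (\<lambda>i. p * a i + q * b i + r * c i) =
    p^2 * dinner d a a + q^2 * dinner d b b + r^2 * dinner d c c
    + 2*p*q * dinner d a b + 2*p*r * dinner d a c + 2*q*r * dinner d b c"
proof -
  have "\<And>i. (p * a i + q * b i + r * c i) * (p * a i + q * b i + r * c i) =
    p^2 * (a i * a i) + q^2 * (b i * b i) + r^2 * (c i * c i)
    + 2*p*q * (a i * b i) + 2*p*r * (a i * c i) + 2*q*r * (b i * c i)"
    by (simp add: algebra_simps power2_eq_square)
  then show ?thesis unfolding dinner_def
    by (simp add: sum.distrib sum_distrib_left)
qed

lemma gram:
  assumes fin: "finite I" and unitI: "\<forall>y\<in>I. dinner d y y = 1"
    and pairI: "\<forall>y\<in>I. \<forall>z\<in>I. y \<noteq> z \<longrightarrow> dinner d y z = \<alpha>"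
    and AI: "A \<subseteq> I" and BI: "B \<subseteq> I"
  shows "dinner d (vs A) (vs B) = \<alpha> * card A * card B + (1 - \<alpha>) * card (A \<inter> B)"
proof -
  have fA: "finite A" and fB: "finite B" using fin AI BI finite_subset by auto
  have inner: "(\<Sum>z\<in>B. dinner d y z) = \<alpha> * card B + (if y \<in> B then 1 - \<alpha> else 0)"
    if "y \<in> A" for y
  proof -
    have "(\<Sum>z\<in>B. dinner d y z) = (\<Sum>z\<in>B. \<alpha> + (if y = z then 1 - \<alpha> else 0))"
      using that AI BI unitI pairI by (intro sum.cong refl) (auto simp: subset_iff)
    also have "\<dots> = \<alpha> * card B + (if y \<in> B then 1 - \<alpha> else 0)"
      using fB by (simp add: sum.distrib)
    finally show ?thesis .
  qed
  have "dinner d (vs A) (vs B) = (\<Sum>y\<in>A. \<Sum>z\<in>B. dinner d y z)"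
    by (subst dinner_vs_left) (simp add: dinner_vs_right)
  also have "\<dots> = (\<Sum>y\<in>A. \<alpha> * card B + (if y \<in> B then 1 - \<alpha> else 0))"
    using inner by (rule sum.cong[OF refl])
  also have "\<dots> = \<alpha> * card A * card B + (1 - \<alpha>) * card (A \<inter> B)"
    using fA by (simp add: sum.distrib sum.If_cases Int_commute)
  finally show ?thesis .
qed

lemma sum_pairs_le:
  assumes fS: "finite S" and unitS: "\<forall>x\<in>S. dinner d x x = 1"
    and pairS: "\<forall>x\<in>S. \<forall>y\<in>S. x \<noteq> y \<longrightarrow> dinner d x y \<le> c"
  shows "dinner d (vs S) (vs S) \<le> card S + c * (real (card S) * card S - card S)"
proof -
  have inner: "(\<Sum>y\<in>S. dinner d x y) \<le> 1 + c * (real (card S) - 1)" if "x \<in> S" for x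
  proof -
    have "(\<Sum>y\<in>S. dinner d x y) = dinner d x x + (\<Sum>y\<in>S-{x}. dinner d x y)"
      using fS that by (simp add: sum.remove)
    also have "(\<Sum>y\<in>S-{x}. dinner d x y) \<le> (\<Sum>y\<in>S-{x}. c)"
      using pairS that by (intro sum_mono) auto
    also have "(\<Sum>y\<in>S-{x}. c) = c * (real (card S) - 1)"
      using fS that by (simp add: card_Diff_singleton of_nat_diff card_gt_0_iff mult.commute)
         (metis One_nat_def card_0_eq empty_iff less_one not_less of_nat_1 of_nat_diff)
    finally show ?thesis using unitS that by simp
  qed
  have "dinner d (vs S) (vs S) = (\<Sum>x\<in>S. \<Sum>y\<in>S. dinner d x y)"
    by (subst dinner_vs_left) (simp add: dinner_vs_right)
  also have "\<dots> \<le> (\<Sum>x\<in>S. 1 + c * (real (card S) - 1))"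
    using inner by (rule sum_mono)
  also have "\<dots> = card S + c * (real (card S) * card S - card S)"
    by (simp add: algebra_simps)
  finally show ?thesis .
qed

lemma clique_bound:
  assumes fS: "finite S" and unitS: "\<forall>x\<in>S. dinner d x x = 1"
    and pairS: "\<forall>x\<in>S. \<forall>y\<in>S. x \<noteq> y \<longrightarrow> dinner d x y \<le> -\<beta>" and b: "0 < \<beta>"
  shows "(real (card S) - 1) * \<beta> \<le> 1"
proof (cases "card S = 0")
  case True then show ?thesis using b by simp
next
  case False
  have "0 \<le> dinner d (vs S) (vs S)" by (rule dinner_self_nonneg)
  also have "\<dots> \<le> card S + (-\<beta>) * (real (card S) * card S - card S)"
    by (rule sum_pairs_le[OF fS unitS pairS])
  finally have h: "0 \<le> real (card S) * (1 - (real (card S) - 1) * \<beta>)"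
    by (simp add: algebra_simps)
  have "0 < real (card S)" using False by simp
  then have "0 \<le> 1 - (real (card S) - 1) * \<beta>" using h
    by (simp add: zero_le_mult_iff)
  then show ?thesis by simp
qed

lemma step1:
  fixes x :: "nat \<Rightarrow> real"
  assumes fin: "finite I" and unitI: "\<forall>y\<in>I. dinner d y y = 1"
    and pairI: "\<forall>y\<in>I. \<forall>z\<in>I. y \<noteq> z \<longrightarrow> dinner d y z = \<alpha>"
    and xx: "dinner d x x = 1" and NI: "N \<subseteq> I"
    and neg: "\<forall>y\<in>N. dinner d x y \<le> -\<beta>" and pos: "\<forall>y\<in>I-N. dinner d x y = \<alpha>"
    and apos: "card (I - N) > 0" and a0: "0 < \<alpha>" and a1: "\<alpha> < 1" and b0: "0 < \<beta>"
  shows "real (card N) * (\<alpha>+\<beta>)^2 \<le> (1-\<alpha>) * (1 + real (card N) / real (card (I-N)))"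
proof -
  define n where "n = real (card N)"
  define a where "a = real (card (I-N))"
  define t where "t = n * (\<alpha>+\<beta>)"
  define s where "s = n / a"
  have apos': "a > 0" using apos by (simp add: a_def)
  have n0: "n \<ge> 0" by (simp add: n_def)
  have t0: "t \<ge> 0" using n0 a0 b0 by (simp add: t_def)
  define V where "V = (\<lambda>i. t * x i + 1 * vs N i + (-s) * vs (I-N) i)"
  have "0 \<le> dinner d V V" by (rule dinner_self_nonneg)
  also have "dinner d V V = t^2 * dinner d x x + 1^2 * dinner d (vs N) (vs N) + (-s)^2 * dinner d (vs (I-N)) (vs (I-N))
    + 2*t*1 * dinner d x (vs N) + 2*t*(-s) * dinner d x (vs (I-N)) + 2*1*(-s) * dinner d (vs N) (vs (I-N))"
    unfolding V_def by (rule expand3)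
  finally have E: "0 \<le> t^2 * dinner d x x + 1^2 * dinner d (vs N) (vs N) + (-s)^2 * dinner d (vs (I-N)) (vs (I-N))
    + 2*t*1 * dinner d x (vs N) + 2*t*(-s) * dinner d x (vs (I-N)) + 2*1*(-s) * dinner d (vs N) (vs (I-N))" .
  have NN: "dinner d (vs N) (vs N) = \<alpha> * n * n + (1-\<alpha>) * n"
    using gram[OF fin unitI pairI NI NI] by (simp add: n_def)
  have AA: "dinner d (vs (I-N)) (vs (I-N)) = \<alpha> * a * a + (1-\<alpha>) * a"
    using gram[OF fin unitI pairI, of "I-N" "I-N"] by (simp add: a_def)
  have NA: "dinner d (vs N) (vs (I-N)) = \<alpha> * n * a"
    using gram[OF fin unitI pairI NI, of "I-N"] by (simp add: a_def n_def Int_Diff)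
  have xN: "dinner d x (vs N) \<le> - \<beta> * n"
  proof -
    have "dinner d x (vs N) = (\<Sum>y\<in>N. dinner d x y)" by (rule dinner_vs_right)
    also have "\<dots> \<le> (\<Sum>y\<in>N. -\<beta>)" using neg by (intro sum_mono) auto
    finally show ?thesis by (simp add: n_def mult.commute)
  qed
  have xA: "dinner d x (vs (I-N)) = \<alpha> * a"
  proof -
    have "dinner d x (vs (I-N)) = (\<Sum>y\<in>I-N. dinner d x y)" by (rule dinner_vs_right)
    also have "\<dots> = (\<Sum>y\<in>I-N. \<alpha>)" using pos by (intro sum.cong) auto
    finally show ?thesis by (simp add: a_def)
  qed
  have mono: "2*t * dinner d x (vs N) \<le> 2*t*(- \<beta> * n)"
    using xN t0 by (intro mult_left_mono) auto
  have eq: "t^2 * dinner d x x + 1^2 * dinner d (vs N) (vs N) + (-s)^2 * dinner d (vs (I-N)) (vs (I-N))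
    + 2*t*1 * dinner d x (vs N) + 2*t*(-s) * dinner d x (vs (I-N)) + 2*1*(-s) * dinner d (vs N) (vs (I-N))
    = t^2 + (\<alpha> * n * n + (1-\<alpha>) * n) + s^2 * (\<alpha> * a * a + (1-\<alpha>) * a)
     + 2*t * dinner d x (vs N) - 2*t*s*(\<alpha>*a) - 2*s*(\<alpha>*n*a)"
    unfolding NN AA NA xA xx by (simp add: algebra_simps)
  have E2: "0 \<le> t^2 + (\<alpha> * n * n + (1-\<alpha>) * n) + s^2 * (\<alpha> * a * a + (1-\<alpha>) * a)
     + 2*t*(-\<beta>*n) - 2*t*s*(\<alpha>*a) - 2*s*(\<alpha>*n*a)"
    using E eq mono by linarith
  have "t^2 + (\<alpha> * n * n + (1-\<alpha>) * n) + s^2 * (\<alpha> * a * a + (1-\<alpha>) * a)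
     + 2*t*(-\<beta>*n) - 2*t*s*(\<alpha>*a) - 2*s*(\<alpha>*n*a)
     = n * ((1-\<alpha>) * (1 + n / a) - n * (\<alpha>+\<beta>)^2)"
    using apos' by (simp add: t_def s_def field_simps power2_eq_square)
  with E2 have E3: "0 \<le> n * ((1-\<alpha>) * (1 + n / a) - n * (\<alpha>+\<beta>)^2)" by simp
  show ?thesis
  proof (cases "n = 0")
    case True then show ?thesis using a1 apos' by (simp add: n_def[symmetric] a_def[symmetric])
  next
    case False
    then have "n > 0" using n0 by simp
    with E3 have "0 \<le> (1-\<alpha>) * (1 + n / a) - n * (\<alpha>+\<beta>)^2" by (simp add: zero_le_mult_iff)
    then show ?thesis by (simp add: n_def a_def)
  qed
qed

lemma step2:
  fixes y :: "nat \<Rightarrow> real"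
  assumes fin: "finite I" and unitI: "\<forall>y\<in>I. dinner d y y = 1"
    and pairI: "\<forall>y\<in>I. \<forall>z\<in>I. y \<noteq> z \<longrightarrow> dinner d y z = \<alpha>"
    and yI: "y \<in> I" and fS: "finite S" and unitS: "\<forall>x\<in>S. dinner d x x = 1"
    and pairS: "\<forall>x\<in>S. \<forall>x'\<in>S. x \<noteq> x' \<longrightarrow> dinner d x x' \<le> \<alpha>"
    and negy: "\<forall>x\<in>S. dinner d x y \<le> -\<beta>"
    and sumZ: "\<forall>x\<in>S. (\<Sum>z\<in>I-{y}. dinner d x z) \<ge> \<alpha> * real (card (I-{y})) - 2*C"
    and mpos: "card (I-{y}) > 0" and a0: "0 < \<alpha>" and a1: "\<alpha> < 1" and b0: "0 < \<beta>"
  shows "real (card S) * (\<alpha>+\<beta>)^2 \<le> (1-\<alpha>) + real (card S) * (1-\<alpha>+4*C) / real (card (I-{y}))"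
proof -
  define Z where "Z = I - {y}"
  define k where "k = real (card S)"
  define m where "m = real (card Z)"
  define t where "t = k * (\<alpha>+\<beta>)"
  define s where "s = k / m"
  have mpos': "m > 0" using mpos by (simp add: m_def Z_def)
  have k0: "k \<ge> 0" by (simp add: k_def)
  have t0: "t \<ge> 0" using k0 a0 b0 by (simp add: t_def)
  have s0: "s \<ge> 0" using k0 mpos' by (simp add: s_def)
  have ZI: "Z \<subseteq> I" by (auto simp: Z_def)
  define V where "V = (\<lambda>i. 1 * vs S i + t * y i + (-s) * vs Z i)"
  have "0 \<le> dinner d V V" by (rule dinner_self_nonneg)
  also have "dinner d V V = 1^2 * dinner d (vs S) (vs S) + t^2 * dinner d y y + (-s)^2 * dinner d (vs Z) (vs Z)
    + 2*1*t * dinner d (vs S) y + 2*1*(-s) * dinner d (vs S) (vs Z) + 2*t*(-s) * dinner d y (vs Z)"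
    unfolding V_def by (rule expand3)
  finally have E: "0 \<le> 1^2 * dinner d (vs S) (vs S) + t^2 * dinner d y y + (-s)^2 * dinner d (vs Z) (vs Z)
    + 2*1*t * dinner d (vs S) y + 2*1*(-s) * dinner d (vs S) (vs Z) + 2*t*(-s) * dinner d y (vs Z)" .
  have SS: "dinner d (vs S) (vs S) \<le> k + \<alpha> * (k * k - k)"
    using sum_pairs_le[OF fS unitS pairS] by (simp add: k_def)
  have yy: "dinner d y y = 1" using unitI yI by simp
  have ZZ: "dinner d (vs Z) (vs Z) = \<alpha> * m * m + (1-\<alpha>) * m"
    using gram[OF fin unitI pairI ZI ZI] by (simp add: m_def)
  have Sy: "dinner d (vs S) y \<le> -\<beta> * k"
  proof -
    have "dinner d (vs S) y = (\<Sum>x\<in>S. dinner d x y)" by (rule dinner_vs_left)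
    also have "\<dots> \<le> (\<Sum>x\<in>S. -\<beta>)" using negy by (intro sum_mono) auto
    finally show ?thesis by (simp add: k_def mult.commute)
  qed
  have SZ: "dinner d (vs S) (vs Z) \<ge> k * (\<alpha> * m - 2*C)"
  proof -
    have "dinner d (vs S) (vs Z) = (\<Sum>x\<in>S. \<Sum>z\<in>Z. dinner d x z)"
      by (subst dinner_vs_left) (simp add: dinner_vs_right)
    also have "\<dots> \<ge> (\<Sum>x\<in>S. \<alpha> * m - 2*C)" using sumZ by (intro sum_mono) (auto simp: Z_def m_def)
    finally show ?thesis by (simp add: k_def)
  qed
  have yZ: "dinner d y (vs Z) = \<alpha> * m"
  proof -
    have "dinner d y (vs Z) = (\<Sum>z\<in>Z. dinner d y z)" by (rule dinner_vs_right)
    also have "\<dots> = (\<Sum>z\<in>Z. \<alpha>)" using pairI yI by (intro sum.cong) (auto simp: Z_def)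
    finally show ?thesis by (simp add: m_def)
  qed
  have m1: "2*t * dinner d (vs S) y \<le> 2*t*(-\<beta> * k)"
    using Sy t0 by (intro mult_left_mono) auto
  have m2: "2*s*(k * (\<alpha> * m - 2*C)) \<le> 2*s * dinner d (vs S) (vs Z)"
    using SZ s0 by (intro mult_left_mono) auto
  have eq: "1^2 * dinner d (vs S) (vs S) + t^2 * dinner d y y + (-s)^2 * dinner d (vs Z) (vs Z)
    + 2*1*t * dinner d (vs S) y + 2*1*(-s) * dinner d (vs S) (vs Z) + 2*t*(-s) * dinner d y (vs Z)
    = dinner d (vs S) (vs S) + t^2 + s^2 * (\<alpha> * m * m + (1-\<alpha>) * m)
      + 2*t * dinner d (vs S) y - 2*s * dinner d (vs S) (vs Z) - 2*t*s*(\<alpha>*m)"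
    unfolding yy ZZ yZ by (simp add: algebra_simps)
  have E2: "0 \<le> (k + \<alpha> * (k * k - k)) + t^2 + s^2 * (\<alpha> * m * m + (1-\<alpha>) * m)
      + 2*t*(-\<beta> * k) - 2*s*(k * (\<alpha> * m - 2*C)) - 2*t*s*(\<alpha>*m)"
    using E eq m1 m2 SS by linarith
  have "(k + \<alpha> * (k * k - k)) + t^2 + s^2 * (\<alpha> * m * m + (1-\<alpha>) * m)
      + 2*t*(-\<beta> * k) - 2*s*(k * (\<alpha> * m - 2*C)) - 2*t*s*(\<alpha>*m)
      = k * ((1-\<alpha>) + k * (1-\<alpha>+4*C) / m - k * (\<alpha>+\<beta>)^2)"
    using mpos' by (simp add: t_def s_def field_simps power2_eq_square)
  with E2 have E3: "0 \<le> k * ((1-\<alpha>) + k * (1-\<alpha>+4*C) / m - k * (\<alpha>+\<beta>)^2)" by simp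
  show ?thesis
  proof (cases "k = 0")
    case True then show ?thesis using a1 by (simp add: k_def[symmetric])
  next
    case False
    then have "k > 0" using k0 by simp
    with E3 have "0 \<le> (1-\<alpha>) + k * (1-\<alpha>+4*C) / m - k * (\<alpha>+\<beta>)^2" by (simp add: zero_le_mult_iff)
    then show ?thesis by (simp add: k_def m_def Z_def)
  qed
qed

lemma adj_sym: "adj \<beta> d x y = adj \<beta> d y x"
  by (auto simp: adj_def dinner_sym)

theorem lemma6:
  fixes \<beta> \<delta> :: real
  assumes "0 < \<beta>" and "\<beta> \<le> 1" and "0 < \<delta>"
  shows "\<exists>M::real. \<forall>\<alpha>::real. \<forall>d::nat. \<forall>P U I.
     0 < \<alpha> \<and> \<alpha> < 1 \<and> finite P \<and> spherical_code d ({-1..-\<beta>} \<union> {\<alpha>}) P \<and>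
     U \<subseteq> P \<and> max_indep_subset \<beta> d U I \<longrightarrow>
     (\<exists>U'. U' \<subseteq> U - I \<and> real (card U') \<ge> real (card U) - M * real (card I) \<and>
        (\<forall>x\<in>U'. real (card {y\<in>I. adj \<beta> d x y}) \<ge> (1 - \<delta>) * real (card I)))"
proof -
  have b0: "0 < \<beta>" and b1: "\<beta> \<le> 1" and d0: "0 < \<delta>" using assms by auto
  define C where "C = 2 / \<beta>^2"
  define m0 where "m0 = max (2/(\<beta>^2*\<delta>)) (2*(1+4*C)/\<beta>^2 + 1)"
  define nn where "nn = nat \<lceil>m0\<rceil> + 1"
  define K0 where "K0 = nat \<lfloor>1/\<beta>\<rfloor> + 2"
  obtain r where r: "\<forall>(V::(nat\<Rightarrow>real) set) E. finite V \<and> card V \<ge> r \<longrightarrow>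
      (\<exists>R\<subseteq>V. card R = K0 \<and> clique R E \<or> card R = nn \<and> Ramsey.indep R E)"
    using ramsey2[of K0 nn] by blast
  have C0: "C \<ge> 0" by (simp add: C_def)
  have bsq: "\<beta>^2 > 0" using b0 by simp
  show ?thesis
  proof (rule exI[of _ "max (1+C) (real r)"], intro allI impI)
    fix \<alpha> :: real and d :: nat and P U I
    assume H: "0 < \<alpha> \<and> \<alpha> < 1 \<and> finite P \<and> spherical_code d ({-1..-\<beta>} \<union> {\<alpha>}) P \<and>
      U \<subseteq> P \<and> max_indep_subset \<beta> d U I"
    then have a0: "0 < \<alpha>" and a1: "\<alpha> < 1" and finP: "finite P" and UP: "U \<subseteq> P"
      and code: "spherical_code d ({-1..-\<beta>} \<union> {\<alpha>}) P" and mx: "max_indep_subset \<beta> d U I"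
      by auto
    define M where "M = max (1+C) (real r)"
    define m where "m = card I"
    have IU: "I \<subseteq> U" and indI: "Defs.indep \<beta> d I"
      and maxI: "\<forall>J. J \<subseteq> U \<and> Defs.indep \<beta> d J \<longrightarrow> card J \<le> m"
      using mx by (auto simp: max_indep_subset_def m_def)
    have finU: "finite U" using finP UP finite_subset by auto
    have finI: "finite I" using finU IU finite_subset by auto
    have unitP: "\<forall>x\<in>P. dinner d x x = 1" using code by (simp add: spherical_code_def)
    have codeP: "\<And>x y. x \<in> P \<Longrightarrow> y \<in> P \<Longrightarrow> x \<noteq> y \<Longrightarrow> dinner d x y \<in> {-1..-\<beta>} \<union> {\<alpha>}"
      using code by (simp add: spherical_code_def)
    have leal: "dinner d x y \<le> \<alpha>" if "x \<in> P" "y \<in> P" "x \<noteq> y" for x y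
      using codeP[OF that] b0 a0 by auto
    have gem1: "dinner d x y \<ge> -1" if "x \<in> P" "y \<in> P" "x \<noteq> y" for x y
      using codeP[OF that] b0 a0 b1 by auto
    have nonadj: "\<And>x y. x \<in> P \<Longrightarrow> y \<in> P \<Longrightarrow> x \<noteq> y \<Longrightarrow> \<not> adj \<beta> d x y \<Longrightarrow> dinner d x y = \<alpha>"
      using codeP by (auto simp: adj_def)
    have adjle: "\<And>x y. adj \<beta> d x y \<Longrightarrow> dinner d x y \<le> -\<beta>"
      by (auto simp: adj_def)
    have IP: "I \<subseteq> P" using IU UP by auto
    have unitI: "\<forall>y\<in>I. dinner d y y = 1" using unitP IP by auto
    have pairI: "\<forall>y\<in>I. \<forall>z\<in>I. y \<noteq> z \<longrightarrow> dinner d y z = \<alpha>"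
    proof (intro ballI impI)
      fix y z assume yz: "y \<in> I" "z \<in> I" "y \<noteq> z"
      then have "\<not> adj \<beta> d y z" using indI by (simp add: Defs.indep_def)
      then show "dinner d y z = \<alpha>" using nonadj yz IP by blast
    qed
    have m_zero: "U = {}" if "m = 0"
    proof (rule ccontr)
      assume "U \<noteq> {}"
      then obtain x where "x \<in> U" by auto
      moreover have "Defs.indep \<beta> d {x}" by (simp add: Defs.indep_def adj_def)
      ultimately have "card {x} \<le> m" using maxI by blast
      then show False using that by simp
    qed
    show "\<exists>U'. U' \<subseteq> U - I \<and> real (card U') \<ge> real (card U) - M * real (card I) \<and>
        (\<forall>x\<in>U'. real (card {y\<in>I. adj \<beta> d x y}) \<ge> (1 - \<delta>) * real (card I))"
    proof (cases "real m < m0")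
      case True
      have cardU: "card U < r"
      proof (rule ccontr)
        assume "\<not> card U < r"
        define E where "E = {e. \<exists>x y. e = {x,y} \<and> adj \<beta> d x y}"
        obtain R where RU: "R \<subseteq> U" and RR: "card R = K0 \<and> clique R E \<or> card R = nn \<and> Ramsey.indep R E"
          using r[rule_format, of U E] finU \<open>\<not> card U < r\<close> unfolding not_less by blast
        have finR: "finite R" using finU RU finite_subset by auto
        from RR show False
        proof
          assume cl: "card R = K0 \<and> clique R E"
          have "\<forall>x\<in>R. \<forall>y\<in>R. x \<noteq> y \<longrightarrow> dinner d x y \<le> -\<beta>"
          proof (intro ballI impI)
            fix x y assume "x \<in> R" "y \<in> R" "x \<noteq> y"
            then have "{x,y} \<in> E" using cl by (simp add: clique_def)
            then obtain a b where ab: "{x,y} = {a,b}" "adj \<beta> d a b" by (auto simp: E_def)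
            then have "adj \<beta> d x y" using adj_sym by (metis doubleton_eq_iff)
            then show "dinner d x y \<le> -\<beta>" by (rule adjle)
          qed
          moreover have "\<forall>x\<in>R. dinner d x x = 1" using unitP RU UP by auto
          ultimately have cb: "(real (card R) - 1) * \<beta> \<le> 1"
            using clique_bound[OF finR] b0 by blast
          have e1: "real (card R) - 1 = real (nat \<lfloor>1/\<beta>\<rfloor>) + 1"
            using cl by (simp add: K0_def)
          have e2: "real (nat \<lfloor>1/\<beta>\<rfloor>) + 1 > 1/\<beta>"
          proof -
            have "0 \<le> \<lfloor>1/\<beta>\<rfloor>" using b0 by simp
            then have "real (nat \<lfloor>1/\<beta>\<rfloor>) = real_of_int \<lfloor>1/\<beta>\<rfloor>" by simp
            moreover have "1/\<beta> < real_of_int \<lfloor>1/\<beta>\<rfloor> + 1" by linarith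
            ultimately show ?thesis by simp
          qed
          have "(1/\<beta>) * \<beta> < (real (card R) - 1) * \<beta>"
            using b0 by (intro mult_strict_right_mono) (use e1 e2 in linarith)+
          then show False using b0 cb by simp
        next
          assume ii: "card R = nn \<and> Ramsey.indep R E"
          have "Defs.indep \<beta> d R"
            unfolding Defs.indep_def
          proof (intro ballI)
            fix x y assume "x \<in> R" "y \<in> R"
            show "\<not> adj \<beta> d x y"
            proof
              assume ad: "adj \<beta> d x y"
              then have "x \<noteq> y" by (simp add: adj_def)
              then have "{x,y} \<notin> E" using ii \<open>x \<in> R\<close> \<open>y \<in> R\<close> by (simp add: Ramsey.indep_def)
              then show False using ad by (auto simp: E_def)
            qed
          qed
          then have "nn \<le> m" using maxI RU ii by auto
          moreover have "real m < real nn"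
            using True by (simp add: nn_def) linarith
          ultimately show False by simp
        qed
      qed
      show ?thesis
      proof (rule exI[of _ "{}"], intro conjI)
        show "real (card {}) \<ge> real (card U) - M * real (card I)"
        proof (cases "m = 0")
          case True then show ?thesis using m_zero by (simp add: m_def)
        next
          case False
          have "real (card U) \<le> real r" using cardU by simp
          also have "\<dots> \<le> M" by (simp add: M_def)
          also have "\<dots> \<le> M * real m"
          proof -
            have "real m \<ge> 1" using False by simp
            moreover have "M \<ge> 0" using C0 by (simp add: M_def)
            ultimately show ?thesis using mult_left_mono[of 1 "real m" M] by simp
          qed
          finally show ?thesis by (simp add: m_def)
        qed
      qed auto
    next
      case False
      then have mm0: "real m \<ge> m0" by simp
      have dm: "\<delta> * real m \<ge> 2/\<beta>^2"
      proof -
        have "real m \<ge> 2/(\<beta>^2*\<delta>)" using mm0 by (simp add: m0_def)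
        then show ?thesis using d0 bsq by (simp add: field_simps)
      qed
      have mbig: "real m - 1 \<ge> 2*(1+4*C)/\<beta>^2" using mm0 by (simp add: m0_def)
      define B where "B = {x\<in>U-I. real (card {y\<in>I. adj \<beta> d x y}) < (1-\<delta>) * real m}"
      have Bfew: "real (card {y\<in>I. adj \<beta> d x y}) \<le> C" if xB: "x \<in> B" for x
      proof -
        define N where "N = {y\<in>I. adj \<beta> d x y}"
        have xP: "x \<in> P" and xI: "x \<notin> I" using xB UP by (auto simp: B_def)
        have NI: "N \<subseteq> I" by (auto simp: N_def)
        have nlt: "real (card N) < (1-\<delta>) * real m" using xB by (simp add: B_def N_def)
        have cA: "real (card (I - N)) = real m - real (card N)"
          using card_Diff_subset[OF finite_subset[OF NI finI] NI] card_mono[OF finI NI]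
          by (simp add: m_def of_nat_diff)
        have abig: "real (card (I - N)) \<ge> 2/\<beta>^2" using cA nlt dm by (simp add: algebra_simps)
        have apos: "card (I - N) > 0"
        proof -
          have "2/\<beta>^2 > 0" using bsq by simp
          then show ?thesis using abig by linarith
        qed
        have neg: "\<forall>y\<in>N. dinner d x y \<le> -\<beta>" using adjle by (auto simp: N_def)
        have pos: "\<forall>y\<in>I-N. dinner d x y = \<alpha>"
          using nonadj xP IP xI by (auto simp: N_def)
        have s1: "real (card N) * (\<alpha>+\<beta>)^2 \<le> (1-\<alpha>) * (1 + real (card N) / real (card (I-N)))"
          by (rule step1[OF finI unitI pairI _ NI neg pos apos a0 a1 b0]) (use unitP xP in auto)
        define n where "n = real (card N)"
        define a where "a = real (card (I-N))"
        have n0: "n \<ge> 0" by (simp add: n_def)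
        have apos': "a > 0" using apos by (simp add: a_def)
        have "n * \<beta>^2 \<le> n * (\<alpha>+\<beta>)^2"
          using n0 a0 b0 by (intro mult_left_mono power_mono) auto
        also have "\<dots> \<le> (1-\<alpha>) * (1 + n / a)" using s1 by (simp add: n_def a_def)
        also have "\<dots> \<le> 1 + n / a"
        proof -
          have "0 \<le> 1 + n/a" using n0 apos' by simp
          then have "(1-\<alpha>) * (1 + n / a) \<le> 1 * (1 + n / a)" using a0 by (intro mult_right_mono) auto
          then show ?thesis by simp
        qed
        also have "n / a \<le> n * \<beta>^2 / 2"
        proof -
          have "1/a \<le> \<beta>^2/2" using abig apos' bsq
            by (simp add: a_def field_simps)
          then have "n * (1/a) \<le> n * (\<beta>^2/2)" using n0 by (intro mult_left_mono)
          then show ?thesis by simp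
        qed
        finally have "n * \<beta>^2 \<le> 1 + n * \<beta>^2 / 2" by simp
        then have "n * \<beta>^2 \<le> 2" by simp
        then have "n \<le> 2 / \<beta>^2" using bsq by (simp add: field_simps)
        then show ?thesis by (simp add: n_def N_def C_def)
      qed
      have By: "real (card {x\<in>B. adj \<beta> d x y}) \<le> C" if yI: "y \<in> I" for y
      proof -
        define S where "S = {x\<in>B. adj \<beta> d x y}"
        define Z where "Z = I - {y}"
        have SP: "S \<subseteq> P" and SI: "S \<inter> I = {}" using UP by (auto simp: S_def B_def)
        have fS: "finite S" using finP SP finite_subset by auto
        have cZ: "real (card Z) = real m - 1"
        proof -
          have "card I \<ge> 1" using yI finI by (metis One_nat_def Suc_leI card_gt_0_iff empty_iff)
          then show ?thesis using yI finI by (simp add: Z_def m_def card_Diff_singleton of_nat_diff)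
        qed
        have mpos: "card (I - {y}) > 0"
        proof -
          have "2*(1+4*C)/\<beta>^2 > 0" using C0 bsq by simp
          then show ?thesis using cZ mbig by (simp add: Z_def)
        qed
        have unitS: "\<forall>x\<in>S. dinner d x x = 1" using unitP SP by auto
        have pairS: "\<forall>x\<in>S. \<forall>x'\<in>S. x \<noteq> x' \<longrightarrow> dinner d x x' \<le> \<alpha>" using leal SP by auto
        have negy: "\<forall>x\<in>S. dinner d x y \<le> -\<beta>" using adjle by (auto simp: S_def)
        have sumZ: "\<forall>x\<in>S. (\<Sum>z\<in>I-{y}. dinner d x z) \<ge> \<alpha> * real (card (I-{y})) - 2*C"
        proof
          fix x assume xS: "x \<in> S"
          have xP: "x \<in> P" and xI: "x \<notin> I" and xB: "x \<in> B" using xS SP SI by (auto simp: S_def)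
          define N where "N = {y\<in>I. adj \<beta> d x y}"
          have fZ: "finite Z" using finI by (simp add: Z_def)
          have "(\<Sum>z\<in>Z. \<alpha> - (if z \<in> N then 2 else 0)) \<le> (\<Sum>z\<in>Z. dinner d x z)"
          proof (rule sum_mono)
            fix z assume zZ: "z \<in> Z"
            then have zP: "z \<in> P" and xz: "x \<noteq> z" using IP xI by (auto simp: Z_def)
            show "\<alpha> - (if z \<in> N then 2 else 0) \<le> dinner d x z"
            proof (cases "z \<in> N")
              case True then show ?thesis using gem1[OF xP zP xz] a1 by simp
            next
              case False
              then have "\<not> adj \<beta> d x z" using zZ by (auto simp: N_def Z_def)
              then show ?thesis using nonadj[OF xP zP xz] False by simp
            qed
          qed
          moreover have "(\<Sum>z\<in>Z. \<alpha> - (if z \<in> N then 2 else 0)) = \<alpha> * real (card Z) - 2 * real (card (Z \<inter> N))"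
            using fZ by (simp add: sum_subtractf sum.If_cases)
          moreover have "real (card (Z \<inter> N)) \<le> C"
          proof -
            have "card (Z \<inter> N) \<le> card N" using finI by (intro card_mono) (auto simp: N_def)
            then show ?thesis using Bfew[OF xB] by (simp add: N_def)
          qed
          ultimately show "(\<Sum>z\<in>I-{y}. dinner d x z) \<ge> \<alpha> * real (card (I-{y})) - 2*C"
            by (simp add: Z_def)
        qed
        have s2: "real (card S) * (\<alpha>+\<beta>)^2 \<le> (1-\<alpha>) + real (card S) * (1-\<alpha>+4*C) / real (card (I-{y}))"
          by (rule step2[OF finI unitI pairI yI fS unitS pairS negy sumZ mpos a0 a1 b0])
        define k where "k = real (card S)"
        define m' where "m' = real (card (I - {y}))"
        have k0: "k \<ge> 0" by (simp add: k_def)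
        have m'pos: "m' > 0" using mpos by (simp add: m'_def)
        have m'big: "m' \<ge> 2*(1+4*C)/\<beta>^2" using cZ mbig by (simp add: m'_def Z_def)
        have "k * \<beta>^2 \<le> k * (\<alpha>+\<beta>)^2"
          using k0 a0 b0 by (intro mult_left_mono power_mono) auto
        also have "\<dots> \<le> (1-\<alpha>) + k * (1-\<alpha>+4*C) / m'" using s2 by (simp add: k_def m'_def)
        also have "\<dots> \<le> 1 + k * (1+4*C) / m'"
        proof -
          have "k * (1-\<alpha>+4*C) \<le> k * (1+4*C)" using k0 a0 by (intro mult_left_mono) auto
          then have "k * (1-\<alpha>+4*C) / m' \<le> k * (1+4*C) / m'" using m'pos by (simp add: divide_right_mono)
          then show ?thesis using a0 by simp
        qed
        also have "k * (1+4*C) / m' \<le> k * \<beta>^2 / 2"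
        proof -
          have "(1+4*C) / m' \<le> \<beta>^2/2"
            using m'big m'pos bsq C0 by (simp add: field_simps)
          then have "k * ((1+4*C) / m') \<le> k * (\<beta>^2/2)" using k0 by (intro mult_left_mono)
          then show ?thesis by simp
        qed
        finally have "k * \<beta>^2 \<le> 1 + k * \<beta>^2 / 2" by simp
        then have "k * \<beta>^2 \<le> 2" by simp
        then have "k \<le> 2 / \<beta>^2" using bsq by (simp add: field_simps)
        then show ?thesis by (simp add: k_def S_def C_def)
      qed
      have Bcover: "B \<subseteq> (\<Union>y\<in>I. {x\<in>B. adj \<beta> d x y})"
      proof
        fix x assume xB: "x \<in> B"
        have xU: "x \<in> U" and xI: "x \<notin> I" using xB by (auto simp: B_def)
        show "x \<in> (\<Union>y\<in>I. {x\<in>B. adj \<beta> d x y})"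
        proof (rule ccontr)
          assume "x \<notin> (\<Union>y\<in>I. {x\<in>B. adj \<beta> d x y})"
          then have na: "\<forall>y\<in>I. \<not> adj \<beta> d x y" using xB by auto
          have "Defs.indep \<beta> d (insert x I)"
            unfolding Defs.indep_def
          proof (intro ballI)
            fix u v assume u: "u \<in> insert x I" and v: "v \<in> insert x I"
            show "\<not> adj \<beta> d u v"
            proof (cases "u = x")
              case True
              then show ?thesis using v na by (cases "v = x") (auto simp: adj_def)
            next
              case False
              then have uI: "u \<in> I" using u by simp
              show ?thesis
              proof (cases "v = x")
                case True then show ?thesis using na uI adj_sym by metis
              next
                case False then show ?thesis using v uI indI by (simp add: Defs.indep_def)
              qed
            qed
          qed
          then have "card (insert x I) \<le> m" using maxI xU IU by auto
          then show False using xI finI by (simp add: m_def)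
        qed
      qed
      have finB: "finite B" using finU by (simp add: B_def)
      have "real (card B) \<le> real (card (\<Union>y\<in>I. {x\<in>B. adj \<beta> d x y}))"
        using Bcover finB finI by (intro of_nat_mono card_mono) auto
      also have "\<dots> \<le> real (\<Sum>y\<in>I. card {x\<in>B. adj \<beta> d x y})"
        using card_UN_le[OF finI] of_nat_mono by blast
      also have "\<dots> = (\<Sum>y\<in>I. real (card {x\<in>B. adj \<beta> d x y}))" by simp
      also have "\<dots> \<le> (\<Sum>y\<in>I. C)" using By by (intro sum_mono) auto
      also have "\<dots> = C * real m" by (simp add: m_def)
      finally have cB: "real (card B) \<le> C * real m" .
      define U' where "U' = (U - I) - B"
      have BUI: "B \<subseteq> U - I" by (auto simp: B_def)
      have cU': "real (card U') = real (card U) - real m - real (card B)"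
      proof -
        have "card U' = card (U - I) - card B"
          unfolding U'_def using BUI finB by (simp add: card_Diff_subset)
        moreover have "card (U - I) = card U - m"
          using IU finI by (simp add: card_Diff_subset m_def)
        moreover have "card B \<le> card (U - I)" using BUI finU by (intro card_mono) auto
        moreover have "m \<le> card U" using IU finU by (simp add: card_mono m_def)
        ultimately show ?thesis by (simp add: of_nat_diff)
      qed
      show ?thesis
      proof (rule exI[of _ U'], intro conjI)
        show "U' \<subseteq> U - I" by (auto simp: U'_def)
        have "M * real m \<ge> (1+C) * real m" by (intro mult_right_mono) (auto simp: M_def)
        then show "real (card U') \<ge> real (card U) - M * real (card I)"
          using cU' cB by (simp add: m_def algebra_simps)
        show "\<forall>x\<in>U'. real (card {y\<in>I. adj \<beta> d x y}) \<ge> (1 - \<delta>) * real (card I)"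
          by (auto simp: U'_def B_def m_def)
      qed
    qed
  qed
qed

end
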